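(* There is a constant $C>0$ depending only on $\theta_*$ (and the fixed model $w$) such that for every $1$-Lipschitz function $\ell$ on $[0,\theta_*]$ with $\ell(0)=0$ and every integer $k\ge1$, there exist real coefficients $b_0,\dots,b_k$ such that $\hat\ell(\theta)=\sum_{x=0}^k b_x f(x\mid\theta)$ satisfies $$\max_{\theta\in[0,\theta_*]}|\ell(\theta)-\hat\ell(\theta)|\le C/k\quad\text{and}\quad \max_{0\le x\le k}|b_x|\le C^k\max_{1\le x\le k}\frac1{w(x)}.$$
   Context: Discrete exponential family model: fix $\theta_*>0$ and $w(x)>0$, $x=0,1,2,\dots$, such that $\sum_{x\ge0}w(x)\theta^x$ has radius of convergence $\theta_r\in(0,\infty]$ with $\theta_*<\theta_r$; $g(\theta)=\big(\sum_{x\ge 0}w(x)\theta^x\big)^{-1}$ and $f(x\mid\theta)=g(\theta)w(x)\theta^x$ for $x\in\{0,1,\dots\}$, $\theta\in[0,\theta_*]$. *)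

theory Defs
  imports "HOL-Analysis.Analysis"
begin

definition gfun :: "(nat \<Rightarrow> real) \<Rightarrow> real \<Rightarrow> real" where
  "gfun w \<theta> = inverse (\<Sum>x. w x * \<theta> ^ x)"

definition fpmf :: "(nat \<Rightarrow> real) \<Rightarrow> nat \<Rightarrow> real \<Rightarrow> real" where
  "fpmf w x \<theta> = gfun w \<theta> * w x * \<theta> ^ x"

end

theory Submission
  imports Defs
begin

definition Qf :: "nat \<Rightarrow> real \<Rightarrow> real" where
  "Qf M x = (\<Sum>m<M. sin_coeff (Suc m) * x ^ m)"

lemma xQf: "x * Qf M x = (\<Sum>m<Suc M. sin_coeff m * x ^ m)"
  unfolding Qf_def sum.lessThan_Suc_shift by (simp add: sum_distrib_left mult_ac)

lemma Qf_approx: "\<bar>x * Qf M x - sin x\<bar> \<le> \<bar>x\<bar> ^ Suc M / fact (Suc M)"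
  using Maclaurin_sin_bound[of x "Suc M"] unfolding xQf[symmetric]
  by (simp add: abs_minus_commute divide_inverse mult_ac)

lemma sin_minus_x: "\<bar>sin x - (x::real)\<bar> \<le> \<bar>x\<bar> ^ 3 / 6"
proof -
  have "(\<Sum>m<3. sin_coeff m * x ^ m) = sin_coeff 0 * x^0 + sin_coeff 1 * x^1 + sin_coeff 2 * x^2"
    by (simp add: eval_nat_numeral)
  moreover have "sin_coeff 1 = 1" "sin_coeff 2 = 0" by (simp_all add: sin_coeff_def)
  ultimately have S: "(\<Sum>m<3. sin_coeff m * x ^ m) = x" by simp
  have F: "fact 3 = (6::real)" by (simp add: numeral_3_eq_3 fact_Suc)
  have "\<bar>sin x - (\<Sum>m<3. sin_coeff m * x ^ m)\<bar> \<le> inverse (fact 3) * \<bar>x\<bar> ^ 3"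
    by (rule Maclaurin_sin_bound)
  then have "\<bar>sin x - x\<bar> \<le> inverse 6 * \<bar>x\<bar> ^ 3" unfolding S F .
  moreover have "inverse 6 * \<bar>x\<bar> ^ 3 = \<bar>x\<bar> ^ 3 / (6::real)" by simp
  ultimately show ?thesis by linarith
qed

lemma pow_div_fact_le_exp:
  assumes "(0::real) \<le> x" shows "x ^ n / fact n \<le> exp x"
proof -
  have s: "(\<lambda>m. x ^ m / fact m) sums exp x" using exp_converges[of x] by (simp add: divide_inverse mult_ac)
  have "sum (\<lambda>m. x ^ m / fact m) {n} \<le> suminf (\<lambda>m. x ^ m / fact m)"
    by (rule sum_le_suminf) (use s assms in \<open>auto simp: sums_iff\<close>)
  then show ?thesis using s by (simp add: sums_iff)
qed

lemma powfact:
  assumes X: "(0::real) \<le> X" and N: "3 * X \<le> real N"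
  shows "X ^ N / fact N \<le> 1"
proof (cases "N = 0")
  case True then show ?thesis by simp
next
  case False
  then have Npos: "real N > 0" by simp
  have e: "real N ^ N / fact N \<le> exp (real N)" by (rule pow_div_fact_le_exp) simp
  have e3: "exp (real N) \<le> 3 ^ N"
  proof -
    have "exp (real N) = exp 1 ^ N" by (simp add: exp_of_nat_mult[symmetric])
    also have "\<dots> \<le> 3 ^ N" by (rule power_mono) (use exp_le in auto)
    finally show ?thesis .
  qed
  have "X ^ N / fact N = (X / real N) ^ N * (real N ^ N / fact N)"
    using Npos by (simp add: power_divide)
  also have "\<dots> \<le> (1/3) ^ N * 3 ^ N"
  proof (rule mult_mono)
    show "(X / real N) ^ N \<le> (1/3) ^ N"
      by (rule power_mono) (use X N Npos in \<open>auto simp: field_simps\<close>)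
    show "real N ^ N / fact N \<le> 3 ^ N" using e e3 by linarith
  qed (use X in auto)
  also have "\<dots> = 1" by (simp add: power_mult_distrib[symmetric])
  finally show ?thesis .
qed

lemma Qf_zero: "0 < M \<Longrightarrow> Qf M 0 = 1"
  unfolding Qf_def by (cases M) (simp_all add: sum.lessThan_Suc_shift sin_coeff_def)

lemma Qf_near1:
  assumes M: "2 \<le> M" and x: "\<bar>x\<bar> \<le> 1"
  shows "\<bar>Qf M x - 1\<bar> \<le> 1/3"
proof (cases "x = 0")
  case True then show ?thesis using M Qf_zero by simp
next
  case False
  have f: "(6::real) \<le> fact (Suc M)"
  proof -
    have "(fact 3 :: real) \<le> fact (Suc M)" by (rule fact_mono) (use M in auto)
    moreover have "fact 3 = (6::real)" by (simp add: eval_nat_numeral)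
    ultimately show ?thesis by simp
  qed
  have p: "\<bar>x\<bar> ^ Suc M \<le> \<bar>x\<bar> ^ 3"
    by (rule power_decreasing) (use M x in auto)
  have "\<bar>x\<bar> ^ Suc M / fact (Suc M) \<le> \<bar>x\<bar> ^ 3 / 6"
    by (rule frac_le) (use p f in auto)
  then have "\<bar>x * Qf M x - x\<bar> \<le> \<bar>x\<bar> ^ 3 / 3"
    using Qf_approx[of x M] sin_minus_x[of x] by linarith
  then have "\<bar>x\<bar> * \<bar>Qf M x - 1\<bar> \<le> \<bar>x\<bar> * (x^2 / 3)"
    by (simp add: abs_mult[symmetric] right_diff_distrib power2_eq_square power3_eq_cube abs_mult_self_eq)
  then have "\<bar>Qf M x - 1\<bar> \<le> x^2/3" using False by simp
  moreover have "x^2 \<le> 1" using abs_le_square_iff[of x 1] x by simp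
  ultimately show ?thesis by simp
qed

lemma Qf_big:
  assumes n: "1 \<le> n" and x: "\<bar>x\<bar> \<le> 2 * real n"
  shows "\<bar>x * Qf (6*n) x\<bar> \<le> 2"
proof -
  have "\<bar>x\<bar> ^ Suc (6*n) \<le> (2 * real n) ^ Suc (6*n)" by (rule power_mono) (use x in auto)
  also have "\<dots> \<le> fact (Suc (6*n))"
    using powfact[of "2 * real n" "Suc (6*n)"] by (simp add: divide_le_eq)
  finally have "\<bar>x\<bar> ^ Suc (6*n) / fact (Suc (6*n)) \<le> 1" by (simp add: divide_le_eq)
  then show ?thesis using Qf_approx[of x "6*n"] abs_sin_le_one[of x] by linarith
qed

lemma Qf_sq_bound:
  assumes n: "1 \<le> n" and x: "\<bar>x\<bar> \<le> 2 * real n"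
  shows "(Qf (6*n) x)^2 * (1 + x^2) \<le> 8"
proof (cases "\<bar>x\<bar> \<le> 1")
  case True
  have "\<bar>Qf (6*n) x - 1\<bar> \<le> 1/3" by (rule Qf_near1) (use n True in auto)
  then have q: "\<bar>Qf (6*n) x\<bar> \<le> 4/3" by linarith
  have "(Qf (6*n) x)^2 \<le> (4/3)^2" using q abs_le_square_iff[of "Qf (6*n) x" "4/3"] by simp
  moreover have "x^2 \<le> 1" using abs_le_square_iff[of x 1] True by simp
  ultimately have "(Qf (6*n) x)^2 * (1 + x^2) \<le> (4/3)^2 * 2"
    by (intro mult_mono) auto
  moreover have "(4/3::real)^2 * 2 \<le> 8" by (simp add: power2_eq_square)
  ultimately show ?thesis by linarith
next
  case False
  have a: "\<bar>x * Qf (6*n) x\<bar> \<le> 2" by (rule Qf_big) (use n x in auto)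
  then have b: "x^2 * (Qf (6*n) x)^2 \<le> 4"
    using abs_le_square_iff[of "x * Qf (6*n) x" 2] by (simp add: power_mult_distrib)
  have "1 \<le> x^2" using False abs_le_square_iff[of 1 x] by simp
  then have "(Qf (6*n) x)^2 \<le> x^2 * (Qf (6*n) x)^2" by (simp add: mult_le_cancel_right1)
  then show ?thesis using b by (simp add: algebra_simps)
qed

lemma Qf_lower:
  assumes n: "1 \<le> n" and x: "\<bar>x\<bar> \<le> 1"
  shows "2/3 \<le> Qf (6*n) x"
  using Qf_near1[of "6*n" x] n x by linarith

definition pk :: "nat \<Rightarrow> real \<Rightarrow> real" where
  "pk n u = (Qf (6*n) (real n * u))^4"

lemma pk_nonneg: "0 \<le> pk n u"
  unfolding pk_def by (simp add: zero_le_even_power)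

lemma cont_Qf: "continuous_on S (Qf M)"
  unfolding Qf_def[abs_def] by (intro continuous_intros)

lemma cont_pk: "continuous_on S (pk n)"
  unfolding pk_def[abs_def] 
  by (intro continuous_intros continuous_on_compose2[OF cont_Qf[of UNIV]]) auto

lemma pk_upper:
  assumes n: "1 \<le> n" and u: "\<bar>u\<bar> \<le> 2"
  shows "pk n u \<le> 64 / (1 + (real n * u)^2)^2"
proof -
  have "\<bar>real n * u\<bar> \<le> 2 * real n" using mult_left_mono[OF u, of "real n"] by (simp add: abs_mult mult.commute)
  then have h: "(Qf (6*n) (real n * u))^2 * (1 + (real n * u)^2) \<le> 8"
    by (rule Qf_sq_bound[OF n])
  have "((Qf (6*n) (real n * u))^2 * (1 + (real n * u)^2))^2 \<le> 8^2"
    by (rule power_mono[OF h]) simp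
  then have "pk n u * (1 + (real n * u)^2)^2 \<le> 64"
    unfolding pk_def by (simp add: power_mult_distrib power_mult[symmetric])
  moreover have "0 < 1 + (real n * u)^2" by (simp add: add_pos_nonneg)
  then have "0 < (1 + (real n * u)^2)^2" by simp
  ultimately show ?thesis by (simp add: le_divide_eq)
qed

lemma pk_lower:
  assumes n: "1 \<le> n" and u: "\<bar>u\<bar> \<le> 1 / real n"
  shows "1/6 \<le> pk n u"
proof -
  have "\<bar>real n * u\<bar> \<le> 1" using u n by (simp add: abs_mult field_simps)
  then have "2/3 \<le> Qf (6*n) (real n * u)" by (rule Qf_lower[OF n])
  then have "(2/3)^4 \<le> (Qf (6*n) (real n * u))^4" by (rule power_mono) simp
  moreover have "(2/3::real)^4 = 16/81" by (simp add: power_divide)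
  ultimately show ?thesis unfolding pk_def by linarith
qed

lemma int_pk: "pk n integrable_on {a..b}"
  by (rule integrable_continuous_interval[OF cont_pk])

lemma kappa_lower:
  assumes n: "1 \<le> n"
  shows "1 / (3 * real n) \<le> integral {-1..1} (pk n)"
proof -
  have "integral {-(1/real n)..1/real n} (\<lambda>_. 1/6::real) \<le> integral {-(1/real n)..1/real n} (pk n)"
    by (rule integral_le) (use pk_lower[OF n] int_pk in auto)
  moreover have "integral {-(1/real n)..1/real n} (\<lambda>_. 1/6::real) = 1 / (3 * real n)"
    using n by simp
  moreover have "integral {-(1/real n)..1/real n} (pk n) \<le> integral {-1..1} (pk n)"
    by (rule integral_subset_le) (use n pk_nonneg int_pk in auto)
  ultimately show ?thesis by linarith
qed

lemma qd_deriv: "((\<lambda>y. y / (1 + y^2)) has_real_derivative ((1 + y^2) - 2 * y * y) / (1 + y^2)^2) (at y)"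
proof -
  have pos: "1 + y^2 \<noteq> 0" by (smt (verit) zero_le_power2)
  have b: "((\<lambda>y. 1 + y^2) has_real_derivative 2 * y) (at y)"
    using DERIV_add[OF DERIV_const[of 1] DERIV_pow[of 2 y]] by simp
  have "((\<lambda>y. y / (1 + y^2)) has_real_derivative (1 * (1 + y^2) - (2 * y * y)) / (1 + y^2) ^ Suc (Suc 0)) (at y)"
    by (rule DERIV_quotient[OF DERIV_ident b pos])
  then show ?thesis by (simp add: numeral_2_eq_2)
qed

lemma g0_deriv: "((\<lambda>y. arctan y + y / (1 + y^2)) has_real_derivative (2 / (1 + y^2)^2)) (at y)"
proof -
  have pos: "0 < 1 + y^2" by (smt (verit) zero_le_power2)
  have "((\<lambda>y. arctan y + y / (1 + y^2)) has_real_derivative (inverse (1 + y^2) + ((1 + y^2) - 2 * y * y) / (1 + y^2)^2)) (at y)"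
    by (rule DERIV_add[OF DERIV_arctan qd_deriv])
  moreover have "inverse (1 + y^2) + ((1 + y^2) - 2 * y * y) / (1 + y^2)^2 = 2 / (1 + y^2)^2"
  proof -
    define D where "D = 1 + y^2"
    have "2 * y * y = 2 * (D - 1)" unfolding D_def by (simp add: power2_eq_square)
    moreover have "D > 0" using pos D_def by simp
    ultimately show ?thesis unfolding D_def[symmetric] by (simp add: field_simps power2_eq_square)
  qed
  ultimately show ?thesis by simp
qed

lemma g2_deriv: "((\<lambda>y. arctan y - y / (1 + y^2)) has_real_derivative (2 * y^2 / (1 + y^2)^2)) (at y)"
proof -
  have pos: "0 < 1 + y^2" by (smt (verit) zero_le_power2)
  have "((\<lambda>y. arctan y - y / (1 + y^2)) has_real_derivative (inverse (1 + y^2) - ((1 + y^2) - 2 * y * y) / (1 + y^2)^2)) (at y)"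
    by (rule DERIV_diff[OF DERIV_arctan qd_deriv])
  moreover have "inverse (1 + y^2) - ((1 + y^2) - 2 * y * y) / (1 + y^2)^2 = 2 * y^2 / (1 + y^2)^2"
  proof -
    define D where "D = 1 + y^2"
    have "2 * y * y = 2 * (D - 1)" "y^2 = D - 1" unfolding D_def by (simp_all add: power2_eq_square)
    moreover have "D > 0" using pos D_def by simp
    ultimately show ?thesis unfolding D_def[symmetric] by (simp add: field_simps power2_eq_square)
  qed
  ultimately show ?thesis by simp
qed

lemma ftc_real:
  assumes "a \<le> b" and "\<And>u. (F has_real_derivative f u) (at u)"
  shows "(f has_integral (F b - F a)) {a..b}"
  by (rule fundamental_theorem_of_calculus[OF assms(1)])
     (use assms(2) in \<open>auto simp: has_real_derivative_iff_has_vector_derivative[symmetric] intro: DERIV_subset\<close>)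

lemma y_div_bound: "\<bar>y / (1 + y^2)\<bar> \<le> (1::real)"
proof -
  have pos: "0 < 1 + y^2" by (simp add: add_pos_nonneg)
  have "\<bar>y\<bar> \<le> 1 + y^2"
  proof (cases "\<bar>y\<bar> \<le> 1")
    case True then show ?thesis by (smt (verit) zero_le_power2)
  next
    case False then have "1 \<le> \<bar>y\<bar>" by simp
    then have "\<bar>y\<bar> * 1 \<le> \<bar>y\<bar> * \<bar>y\<bar>" by (intro mult_left_mono) auto
    then show ?thesis by (simp add: power2_eq_square abs_mult_self_eq)
  qed
  then show ?thesis using pos by (simp add: abs_div divide_le_eq)
qed

lemma arctan_abs_le2: "\<bar>arctan y\<bar> \<le> 2"
  using arctan_bounded[of y] pi_less_4 by linarith

lemma I0_upper:
  assumes n: "1 \<le> n"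
  shows "integral {-2..2} (pk n) \<le> 192 / real n"
proof -
  define gg where "gg y = arctan y + y / (1 + y^2)" for y
  define F where "F u = 32 / real n * gg (real n * u)" for u
  have D: "(F has_real_derivative (64 / (1 + (real n * u)^2)^2)) (at u)" for u
  proof -
    have "((\<lambda>u. arctan (real n * u) + real n * u / (1 + (real n * u)^2)) has_real_derivative
           (2 / (1 + (real n * u)^2)^2) * real n) (at u)"
      by (rule DERIV_chain2[OF g0_deriv]) (rule derivative_eq_intros refl | simp)+
    from DERIV_cmult[OF this, of "32 / real n"] show ?thesis
      unfolding F_def gg_def using n by (simp add: field_simps)
  qed
  have hi: "((\<lambda>u. 64 / (1 + (real n * u)^2)^2) has_integral (F 2 - F (-2))) {-2..2}"
    by (rule ftc_real) (use D in auto)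
  have "integral {-2..2} (pk n) \<le> integral {-2..2} (\<lambda>u. 64 / (1 + (real n * u)^2)^2)"
    by (rule integral_le) (use int_pk hi pk_upper[OF n] in auto)
  also have "\<dots> = F 2 - F (-2)" using hi by (rule integral_unique)
  also have "\<dots> \<le> 192 / real n"
  proof -
    have g3: "\<bar>gg y\<bar> \<le> 3" for y
      unfolding gg_def using arctan_abs_le2[of y] y_div_bound[of y] by linarith
    have "F 2 - F (-2) = 32 / real n * (gg (real n * 2) - gg (real n * (-2)))"
      unfolding F_def by (simp add: right_diff_distrib)
    also have "\<dots> \<le> 32 / real n * 6"
      by (rule mult_left_mono) (use g3[of "real n * 2"] g3[of "real n * (-2)"] in auto)
    finally show ?thesis by simp
  qed
  finally show ?thesis .
qed

lemma I2_upper: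
  assumes n: "1 \<le> n"
  shows "integral {-2..2} (\<lambda>u. u^2 * pk n u) \<le> 192 / real n ^ 3"
proof -
  define gg where "gg y = arctan y - y / (1 + y^2)" for y
  define F where "F u = 32 / real n ^ 3 * gg (real n * u)" for u
  have D: "(F has_real_derivative (64 * u^2 / (1 + (real n * u)^2)^2)) (at u)" for u
  proof -
    have "((\<lambda>u. arctan (real n * u) - real n * u / (1 + (real n * u)^2)) has_real_derivative
           (2 * (real n * u)^2 / (1 + (real n * u)^2)^2) * real n) (at u)"
      by (rule DERIV_chain2[OF g2_deriv]) (rule derivative_eq_intros refl | simp)+
    from DERIV_cmult[OF this, of "32 / real n ^ 3"] show ?thesis
      unfolding F_def gg_def using n by (simp add: field_simps power2_eq_square power3_eq_cube)
  qed
  have hi: "((\<lambda>u. 64 * u^2 / (1 + (real n * u)^2)^2) has_integral (F 2 - F (-2))) {-2..2}"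
    by (rule ftc_real) (use D in auto)
  have int2: "(\<lambda>u. u^2 * pk n u) integrable_on {-2..2}"
    by (rule integrable_continuous_interval) (intro continuous_intros cont_pk)
  have le: "u^2 * pk n u \<le> 64 * u^2 / (1 + (real n * u)^2)^2" if "u \<in> {-2..2}" for u
  proof -
    have "u^2 * pk n u \<le> u^2 * (64 / (1 + (real n * u)^2)^2)"
      by (rule mult_left_mono) (use pk_upper[OF n] that in auto)
    then show ?thesis by (metis times_divide_eq_right mult.commute)
  qed
  have "integral {-2..2} (\<lambda>u. u^2 * pk n u) \<le> integral {-2..2} (\<lambda>u. 64 * u^2 / (1 + (real n * u)^2)^2)"
    by (rule integral_le) (use int2 hi le in auto)
  also have "\<dots> = F 2 - F (-2)" using hi by (rule integral_unique)
  also have "\<dots> \<le> 192 / real n ^ 3"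
  proof -
    have g3: "\<bar>gg y\<bar> \<le> 3" for y
      unfolding gg_def using arctan_abs_le2[of y] y_div_bound[of y] by linarith
    have "F 2 - F (-2) = 32 / real n ^ 3 * (gg (real n * 2) - gg (real n * (-2)))"
      unfolding F_def by (simp add: right_diff_distrib)
    also have "\<dots> \<le> 32 / real n ^ 3 * 6"
      by (rule mult_left_mono) (use g3[of "real n * 2"] g3[of "real n * (-2)"] in auto)
    finally show ?thesis by simp
  qed
  finally show ?thesis .
qed

lemma has_integral_sub_reflect:
  fixes h :: "real \<Rightarrow> real"
  assumes "(h has_integral I) {a..b}"
  shows "((\<lambda>t. h (x - t)) has_integral I) {x-b..x-a}"
proof -
  have "((\<lambda>s. h (s + x)) has_integral I) {a-x..b-x}"
    by (rule has_integral_shift_real_ivl[OF assms])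
  then have "((\<lambda>t. h (- t + x)) has_integral I) {-(b-x)..-(a-x)}"
    by (subst has_integral_reflect_real) 
  then show ?thesis by simp
qed

lemma int_u2pk: "(\<lambda>u. u^2 * pk n u) integrable_on {a..b}"
  by (rule integrable_continuous_interval) (intro continuous_intros cont_pk)

lemma pieces:
  assumes n: "1 \<le> n" and x: "x \<in> {0..1}"
  shows "integral {-1..1} (pk n) \<le> integral {x-2..x+1} (pk n)"
    and "integral {x-2..x+1} (pk n) - integral {-1..1} (pk n) \<le> integral {x-2..x+1} (\<lambda>u. u^2 * pk n u)"
proof -
  let ?p = "pk n" and ?q = "\<lambda>u. u^2 * pk n u"
  have x0: "0 \<le> x" and x1: "x \<le> 1" using x by auto
  have c1: "integral {x-2..-1} ?p + integral {-1..x+1} ?p = integral {x-2..x+1} ?p"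
    by (rule Henstock_Kurzweil_Integration.integral_combine) (use x0 x1 int_pk in auto)
  have c2: "integral {-1..1} ?p + integral {1..x+1} ?p = integral {-1..x+1} ?p"
    by (rule Henstock_Kurzweil_Integration.integral_combine) (use x0 x1 int_pk in auto)
  have d1: "integral {x-2..-1} ?q + integral {-1..x+1} ?q = integral {x-2..x+1} ?q"
    by (rule Henstock_Kurzweil_Integration.integral_combine) (use x0 x1 int_u2pk in auto)
  have d2: "integral {-1..1} ?q + integral {1..x+1} ?q = integral {-1..x+1} ?q"
    by (rule Henstock_Kurzweil_Integration.integral_combine) (use x0 x1 int_u2pk in auto)
  have a1: "0 \<le> integral {x-2..-1} ?p" by (rule integral_nonneg) (use int_pk pk_nonneg in auto)
  have a3: "0 \<le> integral {1..x+1} ?p" by (rule integral_nonneg) (use int_pk pk_nonneg in auto)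
  have b2: "0 \<le> integral {-1..1} ?q" by (rule integral_nonneg) (use int_u2pk pk_nonneg in auto)
  have sq1: "1 \<le> u^2" if "1 \<le> \<bar>u\<bar>" for u :: real
    using that by (metis abs_le_square_iff abs_one power_one)
  have ab1: "integral {x-2..-1} ?p \<le> integral {x-2..-1} ?q"
  proof (rule integral_le)
    fix u assume "u \<in> {x-2..-1}" then have "1 \<le> u^2" using sq1 by auto
    then show "pk n u \<le> u^2 * pk n u" using pk_nonneg[of n u] by (simp add: mult_le_cancel_right1)
  qed (use int_pk int_u2pk in auto)
  have ab3: "integral {1..x+1} ?p \<le> integral {1..x+1} ?q"
  proof (rule integral_le)
    fix u assume "u \<in> {1..x+1}" then have "1 \<le> u^2" using sq1 by auto
    then show "pk n u \<le> u^2 * pk n u" using pk_nonneg[of n u] by (simp add: mult_le_cancel_right1)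
  qed (use int_pk int_u2pk in auto)
  show "integral {-1..1} (pk n) \<le> integral {x-2..x+1} (pk n)" using c1 c2 a1 a3 by linarith
  show "integral {x-2..x+1} (pk n) - integral {-1..1} (pk n) \<le> integral {x-2..x+1} (\<lambda>u. u^2 * pk n u)"
    using c1 c2 d1 d2 ab1 ab3 b2 by linarith
qed

lemma conv_approx:
  assumes n: "1 \<le> n" and x: "x \<in> {0..1}"
    and Gc: "continuous_on UNIV G"
    and GL: "\<And>s t. \<bar>G s - G t\<bar> \<le> L * \<bar>s - t\<bar>"
    and GB: "\<And>t. \<bar>G t\<bar> \<le> Fm" and L0: "0 \<le> L"
  shows "\<bar>integral {-1..2} (\<lambda>t. G t * pk n (x - t)) / integral {-1..1} (pk n) - G x\<bar> \<le> 576 * (L + Fm) / real n"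
proof -
  let ?p = "pk n" and ?q = "\<lambda>u. u^2 * pk n u"
  define \<kappa> where "\<kappa> = integral {-1..1} (pk n)"
  define J0 where "J0 = integral {x-2..x+1} ?p"
  define J2 where "J2 = integral {x-2..x+1} ?q"
  define A where "A = integral {-1..2} (\<lambda>t. G t * pk n (x - t))"
  have Fm0: "0 \<le> Fm" using GB[of 0] by linarith
  have kap: "1 / (3 * real n) \<le> \<kappa>" unfolding \<kappa>_def by (rule kappa_lower[OF n])
  have npos: "0 < real n" using n by simp
  have "0 < 1 / (3 * real n)" using npos by simp
  then have kpos: "0 < \<kappa>" using kap by linarith
  have h0: "((\<lambda>t. pk n (x - t)) has_integral J0) {-1..2}"
    using has_integral_sub_reflect[OF integrable_integral[OF int_pk[of n "x-2" "x+1"]], of x]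
    unfolding J0_def by simp
  have h2: "((\<lambda>t. (x - t)^2 * pk n (x - t)) has_integral J2) {-1..2}"
    using has_integral_sub_reflect[OF integrable_integral[OF int_u2pk[of n "x-2" "x+1"]], of x]
    unfolding J2_def by simp
  have x0: "0 \<le> x" and x1: "x \<le> 1" using x by auto
  have J0le: "J0 \<le> 192 / real n"
  proof -
    have "J0 \<le> integral {-2..2} ?p" unfolding J0_def
      by (rule integral_subset_le) (use x0 x1 int_pk pk_nonneg in auto)
    then show ?thesis using I0_upper[OF n] by linarith
  qed
  have J2le: "J2 \<le> 192 / real n ^ 3"
  proof -
    have "J2 \<le> integral {-2..2} ?q" unfolding J2_def
      by (rule integral_subset_le) (use x0 x1 int_u2pk pk_nonneg in auto)
    then show ?thesis using I2_upper[OF n] by linarith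
  qed
  have J20: "0 \<le> J2" unfolding J2_def by (rule integral_nonneg) (use int_u2pk pk_nonneg in auto)
  have pc: "\<kappa> \<le> J0" "J0 - \<kappa> \<le> J2" using pieces[OF n x] unfolding \<kappa>_def J0_def J2_def by auto
  have contk: "continuous_on UNIV (\<lambda>t. pk n (x - t))"
    by (intro continuous_on_compose2[OF cont_pk[of UNIV]] continuous_intros) auto
  have hA: "((\<lambda>t. G t * pk n (x - t)) has_integral A) {-1..2}"
    unfolding A_def
    by (rule integrable_integral, rule integrable_continuous_interval)
       (intro continuous_intros continuous_on_subset[OF Gc] continuous_on_subset[OF contk]; simp)
  have hf: "((\<lambda>t. G t * pk n (x - t) - G x * pk n (x - t)) has_integral (A - G x * J0)) {-1..2}"
    by (intro has_integral_diff hA has_integral_mult_right h0)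
  define g where "g t = (L * real n / 2) * ((x - t)^2 * pk n (x - t)) + (L / (2 * real n)) * pk n (x - t)" for t
  have hg: "(g has_integral ((L * real n / 2) * J2 + (L / (2 * real n)) * J0)) {-1..2}"
    unfolding g_def by (intro has_integral_add has_integral_mult_right h0 h2)
  have fg: "norm (G t * pk n (x - t) - G x * pk n (x - t)) \<le> g t" for t
  proof -
    have am: "\<bar>x - t\<bar> \<le> real n * (x - t)^2 / 2 + 1 / (2 * real n)"
    proof -
      have "0 \<le> (real n * \<bar>x - t\<bar> - 1)^2" by simp
      then have "2 * real n * \<bar>x - t\<bar> \<le> (real n)^2 * (x-t)^2 + 1"
        by (simp add: power2_eq_square algebra_simps abs_mult_self_eq)
      then show ?thesis using npos by (simp add: field_simps power2_eq_square)
    qed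
    have "norm (G t * pk n (x - t) - G x * pk n (x - t)) = \<bar>G t - G x\<bar> * pk n (x - t)"
      using pk_nonneg[of n "x-t"] by (simp add: left_diff_distrib[symmetric] abs_mult)
    also have "\<dots> \<le> (L * \<bar>x - t\<bar>) * pk n (x - t)"
      by (rule mult_right_mono) (use GL[of t x] pk_nonneg in \<open>auto simp: abs_minus_commute\<close>)
    also have "\<dots> \<le> (L * (real n * (x - t)^2 / 2 + 1 / (2 * real n))) * pk n (x - t)"
      by (intro mult_right_mono mult_left_mono am L0 pk_nonneg)
    also have "\<dots> = g t" unfolding g_def by (simp add: algebra_simps)
    finally show ?thesis .
  qed
  have bnd1: "\<bar>A - G x * J0\<bar> \<le> (L * real n / 2) * J2 + (L / (2 * real n)) * J0"
    using integral_norm_bound_integral[OF has_integral_integrable[OF hf] has_integral_integrable[OF hg]] fg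
      integral_unique[OF hf] integral_unique[OF hg] by auto
  have "\<bar>A - \<kappa> * G x\<bar> \<le> \<bar>A - G x * J0\<bar> + \<bar>G x\<bar> * (J0 - \<kappa>)"
  proof -
    have "A - \<kappa> * G x = (A - G x * J0) + G x * (J0 - \<kappa>)" by (simp add: algebra_simps)
    moreover have "\<bar>(A - G x * J0) + G x * (J0 - \<kappa>)\<bar> \<le> \<bar>A - G x * J0\<bar> + \<bar>G x * (J0 - \<kappa>)\<bar>"
      by (rule abs_triangle_ineq)
    moreover have "\<bar>G x * (J0 - \<kappa>)\<bar> = \<bar>G x\<bar> * (J0 - \<kappa>)" using pc(1) by (simp add: abs_mult)
    ultimately show ?thesis by simp
  qed
  also have "\<dots> \<le> ((L * real n / 2) * J2 + (L / (2 * real n)) * J0) + Fm * J2"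
    by (intro add_mono bnd1 mult_mono GB) (use pc Fm0 in auto)
  also have "\<dots> \<le> ((L * real n / 2) * (192 / real n ^ 3) + (L / (2 * real n)) * (192 / real n)) + Fm * (192 / real n ^ 3)"
    by (intro add_mono mult_left_mono J0le J2le) (use L0 Fm0 npos in auto)
  also have "\<dots> \<le> 192 * (L + Fm) / (real n)^2"
  proof -
    have "Fm * (192 / real n ^ 3) \<le> Fm * (192 / real n ^ 2)"
      by (rule mult_left_mono) (use n Fm0 in \<open>auto simp: frac_le power_increasing\<close>)
    moreover have "(L * real n / 2) * (192 / real n ^ 3) + (L / (2 * real n)) * (192 / real n) = 192 * L / (real n)^2"
      using npos by (simp add: field_simps power2_eq_square power3_eq_cube)
    moreover have "192 * (L + Fm) / (real n)^2 = 192 * L / (real n)^2 + Fm * (192 / real n ^ 2)"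
      by (simp add: add_divide_distrib algebra_simps)
    ultimately show ?thesis by linarith
  qed
  finally have main: "\<bar>A - \<kappa> * G x\<bar> \<le> 192 * (L + Fm) / (real n)^2" .
  have "\<bar>A / \<kappa> - G x\<bar> = \<bar>A - \<kappa> * G x\<bar> / \<kappa>" using kpos by (simp add: field_simps abs_div)
  also have "\<dots> \<le> (192 * (L + Fm) / (real n)^2) / (1 / (3 * real n))"
    by (rule frac_le) (use main kap kpos npos L0 Fm0 in auto)
  also have "\<dots> = 576 * (L + Fm) / real n" using npos by (simp add: field_simps power2_eq_square)
  finally show ?thesis unfolding A_def \<kappa>_def .
qed

definition polyrep :: "nat \<Rightarrow> real \<Rightarrow> (real \<Rightarrow> real) \<Rightarrow> bool" where
  "polyrep D B f \<longleftrightarrow> (\<exists>c. (\<forall>i>D. c i = 0) \<and> (\<forall>i. \<bar>c i\<bar> \<le> B) \<and> (\<forall>u. f u = (\<Sum>i\<le>D. c i * u ^ i)))"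

lemma sum_abs_trunc:
  assumes "\<And>i. i > D \<Longrightarrow> a i = 0" "\<And>i. \<bar>a i\<bar> \<le> B"
  shows "(\<Sum>i\<le>k. \<bar>a i\<bar>) \<le> real (Suc D) * B"
proof -
  have "(\<Sum>i\<le>k. \<bar>a i\<bar>) \<le> (\<Sum>i\<le>k + D. \<bar>a i\<bar>)"
    by (rule sum_mono2) auto
  also have "\<dots> = (\<Sum>i\<le>D. \<bar>a i\<bar>)"
    by (rule sum.mono_neutral_right) (use assms(1) in auto)
  also have "\<dots> \<le> real (card {..D}) * B"
    by (rule sum_bounded_above) (use assms(2) in auto)
  finally show ?thesis by simp
qed

lemma polyrep_mult:
  assumes f: "polyrep D1 B1 f" and g: "polyrep D2 B2 g" and B2: "0 \<le> B2"
  shows "polyrep (D1 + D2) (real (Suc D1) * B1 * B2) (\<lambda>u. f u * g u)"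
proof -
  obtain a where a0: "\<And>i. i > D1 \<Longrightarrow> a i = 0" and ab: "\<And>i. \<bar>a i\<bar> \<le> B1"
    and af: "\<And>u. f u = (\<Sum>i\<le>D1. a i * u ^ i)" using f unfolding polyrep_def by blast
  obtain b where b0: "\<And>i. i > D2 \<Longrightarrow> b i = 0" and bb: "\<And>i. \<bar>b i\<bar> \<le> B2"
    and bg: "\<And>u. g u = (\<Sum>i\<le>D2. b i * u ^ i)" using g unfolding polyrep_def by blast
  define c where "c r = (\<Sum>k\<le>r. a k * b (r - k))" for r
  have c0: "c r = 0" if "r > D1 + D2" for r
    unfolding c_def
  proof (rule sum.neutral, intro ballI)
    fix k assume "k \<in> {..r}"
    show "a k * b (r - k) = 0"
    proof (cases "k > D1")
      case True then show ?thesis using a0 by simp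
    next
      case False then have "r - k > D2" using that by linarith
      then show ?thesis using b0 by simp
    qed
  qed
  have cb: "\<bar>c r\<bar> \<le> real (Suc D1) * B1 * B2" for r
  proof -
    have "\<bar>c r\<bar> \<le> (\<Sum>k\<le>r. \<bar>a k\<bar> * \<bar>b (r - k)\<bar>)"
      unfolding c_def by (rule order_trans[OF sum_abs]) (simp add: abs_mult)
    also have "\<dots> \<le> (\<Sum>k\<le>r. \<bar>a k\<bar> * B2)"
      by (intro sum_mono mult_left_mono bb) auto
    also have "\<dots> = (\<Sum>k\<le>r. \<bar>a k\<bar>) * B2" by (simp add: sum_distrib_right)
    also have "\<dots> \<le> (real (Suc D1) * B1) * B2"
      by (rule mult_right_mono[OF sum_abs_trunc B2]) (use a0 ab in auto)
    finally show ?thesis by simp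
  qed
  have "f u * g u = (\<Sum>r\<le>D1 + D2. c r * u ^ r)" for u
    unfolding af bg c_def by (rule polynomial_product) (use a0 b0 in auto)
  then show ?thesis unfolding polyrep_def using c0 cb by blast
qed

lemma sin_coeff_abs: "\<bar>sin_coeff k\<bar> \<le> 1 / fact k"
  by (simp add: sin_coeff_def abs_div)

lemma polyrep_Q:
  assumes n: "1 \<le> n"
  shows "polyrep (6*n) (exp (real n)) (\<lambda>u. Qf (6*n) (real n * u))"
proof -
  define c where "c m = (if m < 6*n then sin_coeff (Suc m) * real n ^ m else 0)" for m
  have c0: "c i = 0" if "i > 6*n" for i using that unfolding c_def by auto
  have cb: "\<bar>c m\<bar> \<le> exp (real n)" for m
  proof (cases "m < 6*n")
    case True
    have "\<bar>c m\<bar> = \<bar>sin_coeff (Suc m)\<bar> * real n ^ m" using True unfolding c_def by (simp add: abs_mult)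
    also have "\<dots> \<le> (1 / fact (Suc m)) * real n ^ m"
      by (rule mult_right_mono[OF sin_coeff_abs]) simp
    also have "\<dots> \<le> (1 / fact m) * real n ^ m"
      by (rule mult_right_mono) (auto intro!: divide_left_mono fact_mono simp: fact_gt_zero)
    also have "\<dots> \<le> exp (real n)" using pow_div_fact_le_exp[of "real n" m] by simp
    finally show ?thesis .
  qed (auto simp: c_def)
  have "Qf (6*n) (real n * u) = (\<Sum>i\<le>6*n. c i * u ^ i)" for u
  proof -
    have "(\<Sum>i\<le>6*n. c i * u ^ i) = (\<Sum>i<Suc (6*n). c i * u ^ i)"
      by (simp only: lessThan_Suc_atMost)
    also have "\<dots> = (\<Sum>i<6*n. c i * u ^ i) + c (6*n) * u ^ (6*n)"
      by (rule sum.lessThan_Suc)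
    also have "\<dots> = (\<Sum>i<6*n. c i * u ^ i)" by (simp add: c_def)
    also have "\<dots> = Qf (6*n) (real n * u)"
      unfolding Qf_def c_def by (intro sum.cong) (auto simp: power_mult_distrib)
    finally show ?thesis by simp
  qed
  then show ?thesis unfolding polyrep_def using c0 cb by blast
qed

lemma polyrep_pk:
  assumes n: "1 \<le> n"
  shows "polyrep (24*n) (real (Suc (6*n)) ^ 3 * exp (real n) ^ 4) (pk n)"
proof -
  let ?Q = "\<lambda>u. Qf (6*n) (real n * u)"
  have q: "polyrep (6*n) (exp (real n)) ?Q" by (rule polyrep_Q[OF n])
  have q2: "polyrep (6*n + 6*n) (real (Suc (6*n)) * exp (real n) * exp (real n)) (\<lambda>u. ?Q u * ?Q u)"
    by (rule polyrep_mult[OF q q]) simp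
  have q3: "polyrep (6*n + (6*n + 6*n)) (real (Suc (6*n)) * exp (real n) * (real (Suc (6*n)) * exp (real n) * exp (real n))) (\<lambda>u. ?Q u * (?Q u * ?Q u))"
    by (rule polyrep_mult[OF q q2]) simp
  have q4: "polyrep (6*n + (6*n + (6*n + 6*n))) (real (Suc (6*n)) * exp (real n) * (real (Suc (6*n)) * exp (real n) * (real (Suc (6*n)) * exp (real n) * exp (real n)))) (\<lambda>u. ?Q u * (?Q u * (?Q u * ?Q u)))"
    by (rule polyrep_mult[OF q q3]) simp
  have e1: "(\<lambda>u. ?Q u * (?Q u * (?Q u * ?Q u))) = pk n"
    by (rule ext) (simp add: pk_def power4_eq_xxxx)
  have e2: "6*n + (6*n + (6*n + 6*n)) = 24*n" by simp
  have e3: "real (Suc (6*n)) * exp (real n) * (real (Suc (6*n)) * exp (real n) * (real (Suc (6*n)) * exp (real n) * exp (real n))) = real (Suc (6*n)) ^ 3 * exp (real n) ^ 4"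
    by (simp add: power3_eq_cube power4_eq_xxxx mult_ac)
  show ?thesis using q4 unfolding e1 e2 e3 .
qed

lemma binom_expand:
  fixes x t :: real
  assumes "j \<le> D"
  shows "(x - t) ^ j = (\<Sum>i\<le>D. real (j choose i) * x ^ i * (- t) ^ (j - i))"
proof -
  have "(x - t) ^ j = (x + (- t)) ^ j" by simp
  also have "\<dots> = (\<Sum>i\<le>j. real (j choose i) * x ^ i * (- t) ^ (j - i))"
    by (rule binomial_ring)
  also have "\<dots> = (\<Sum>i\<le>D. real (j choose i) * x ^ i * (- t) ^ (j - i))"
    by (rule sum.mono_neutral_left) (use assms in auto)
  finally show ?thesis .
qed

lemma conv_poly:
  assumes h: "polyrep D P h" and Gc: "continuous_on UNIV G" and GB: "\<And>t. \<bar>G t\<bar> \<le> Fm"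
  shows "\<exists>c. (\<forall>x. integral {-1..2} (\<lambda>t. G t * h (x - t)) = (\<Sum>i\<le>D. c i * x ^ i)) \<and>
             (\<forall>i. \<bar>c i\<bar> \<le> real (Suc D) * P * 4 ^ D * (3 * Fm))"
proof -
  obtain a where a0: "\<And>i. i > D \<Longrightarrow> a i = 0" and ab: "\<And>i. \<bar>a i\<bar> \<le> P"
    and ah: "\<And>u. h u = (\<Sum>i\<le>D. a i * u ^ i)" using h unfolding polyrep_def by blast
  have Fm0: "0 \<le> Fm" using GB[of 0] by linarith
  have P0: "0 \<le> P" using ab[of 0] by linarith
  define e where "e i j = integral {-1..2} (\<lambda>t. G t * (- t) ^ (j - i))" for i j :: nat
  define c where "c i = (\<Sum>j\<le>D. a j * real (j choose i) * e i j)" for i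
  have he: "((\<lambda>t. G t * (- t) ^ (j - i)) has_integral e i j) {-1..2}" for i j
    unfolding e_def
    by (rule integrable_integral, rule integrable_continuous_interval)
       (intro continuous_intros continuous_on_subset[OF Gc]; simp)
  have eb: "\<bar>e i j\<bar> \<le> 3 * Fm * 2 ^ (j - i)" for i j
  proof -
    have "norm (integral {-1..2} (\<lambda>t. G t * (- t) ^ (j - i))) \<le> integral {-1..2::real} (\<lambda>t. Fm * 2 ^ (j - i))"
    proof (rule integral_norm_bound_integral)
      show "(\<lambda>t. G t * (- t) ^ (j - i)) integrable_on {-1..2}" using he by blast
      show "(\<lambda>t. Fm * 2 ^ (j - i)) integrable_on {-1..2::real}"
        by (rule integrable_continuous_interval) (intro continuous_intros)
      fix t :: real assume t: "t \<in> {-1..2}"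
      have "\<bar>- t\<bar> \<le> 2" using t by auto
      then have "\<bar>- t\<bar> ^ (j - i) \<le> 2 ^ (j - i)" by (intro power_mono) auto
      then have "\<bar>(- t) ^ (j - i)\<bar> \<le> 2 ^ (j - i)" by (simp only: power_abs)
      then show "norm (G t * (- t) ^ (j - i)) \<le> Fm * 2 ^ (j - i)"
        by (simp add: abs_mult) (intro mult_mono GB; simp add: Fm0)
    qed
    then show ?thesis unfolding e_def by simp
  qed
  have eq: "integral {-1..2} (\<lambda>t. G t * h (x - t)) = (\<Sum>i\<le>D. c i * x ^ i)" for x
  proof -
    have pt: "G t * h (x - t) = (\<Sum>i\<le>D. x ^ i * (\<Sum>j\<le>D. a j * real (j choose i) * (G t * (- t) ^ (j - i))))" for t
    proof -
      have "G t * h (x - t) = G t * (\<Sum>j\<le>D. a j * (\<Sum>i\<le>D. real (j choose i) * x ^ i * (- t) ^ (j - i)))"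
        unfolding ah by (intro arg_cong[where f="\<lambda>z. G t * z"] sum.cong refl) (simp add: binom_expand)
      also have "\<dots> = (\<Sum>j\<le>D. \<Sum>i\<le>D. x ^ i * (a j * real (j choose i) * (G t * (- t) ^ (j - i))))"
        by (simp add: sum_distrib_left mult_ac)
      also have "\<dots> = (\<Sum>i\<le>D. \<Sum>j\<le>D. x ^ i * (a j * real (j choose i) * (G t * (- t) ^ (j - i))))"
        by (rule sum.swap)
      also have "\<dots> = (\<Sum>i\<le>D. x ^ i * (\<Sum>j\<le>D. a j * real (j choose i) * (G t * (- t) ^ (j - i))))"
        by (simp add: sum_distrib_left)
      finally show ?thesis .
    qed
    have hi: "((\<lambda>t. \<Sum>i\<le>D. x ^ i * (\<Sum>j\<le>D. a j * real (j choose i) * (G t * (- t) ^ (j - i))))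
               has_integral (\<Sum>i\<le>D. x ^ i * (\<Sum>j\<le>D. a j * real (j choose i) * e i j))) {-1..2}"
      by (intro has_integral_sum has_integral_mult_right he finite_atMost)
    have "integral {-1..2} (\<lambda>t. G t * h (x - t)) = (\<Sum>i\<le>D. x ^ i * (\<Sum>j\<le>D. a j * real (j choose i) * e i j))"
      unfolding pt using hi by (rule integral_unique)
    then show ?thesis unfolding c_def by (simp add: mult_ac)
  qed
  have cb: "\<bar>c i\<bar> \<le> real (Suc D) * P * 4 ^ D * (3 * Fm)" for i
  proof -
    have "\<bar>c i\<bar> \<le> (\<Sum>j\<le>D. \<bar>a j * real (j choose i) * e i j\<bar>)"
      unfolding c_def by (rule sum_abs)
    also have "\<dots> \<le> (\<Sum>j\<le>D. P * 4 ^ D * (3 * Fm))"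
    proof (rule sum_mono)
      fix j assume j: "j \<in> {..D}"
      have b1: "real (j choose i) \<le> 2 ^ j" using binomial_le_pow2[of j i] by (metis of_nat_le_iff of_nat_numeral of_nat_power)
      have b2: "(2::real) ^ (j - i) \<le> 2 ^ j" by (rule power_increasing) auto
      have b3: "(2::real) ^ j * 2 ^ j \<le> 4 ^ D"
      proof -
        have "(2::real) ^ j * 2 ^ j = 4 ^ j" by (simp add: power_mult_distrib[symmetric])
        also have "\<dots> \<le> 4 ^ D" by (rule power_increasing) (use j in auto)
        finally show ?thesis .
      qed
      have "\<bar>a j * real (j choose i) * e i j\<bar> = \<bar>a j\<bar> * real (j choose i) * \<bar>e i j\<bar>" by (simp add: abs_mult)
      also have "\<dots> \<le> P * 2 ^ j * (3 * Fm * 2 ^ j)"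
        by (intro mult_mono ab b1 order_trans[OF eb] mult_left_mono b2) (use P0 Fm0 in auto)
      also have "\<dots> = P * (2 ^ j * 2 ^ j) * (3 * Fm)" by (simp add: mult_ac)
      also have "\<dots> \<le> P * 4 ^ D * (3 * Fm)"
        by (intro mult_right_mono mult_left_mono b3) (use P0 Fm0 in auto)
      finally show "\<bar>a j * real (j choose i) * e i j\<bar> \<le> P * 4 ^ D * (3 * Fm)" .
    qed
    also have "\<dots> = real (Suc D) * P * 4 ^ D * (3 * Fm)" by simp
    finally show ?thesis .
  qed
  show ?thesis using eq cb by blast
qed

lemma bern: "1 + real n * real a \<le> real (Suc a) ^ n"
  using Bernoulli_inequality[of "real a" n] by simp

lemma pow_bound:
  assumes n: "1 \<le> n"
  shows "3 * real n * (real (Suc (24*n)) * (real (Suc (6*n)) ^ 3 * exp (real n) ^ 4) * 4 ^ (24*n) * 3)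
         \<le> 9 * (2 * 25 * 7^3 * 3^4 * 4^24) ^ n"
proof -
  have a1: "real n \<le> 2 ^ n" using less_exp[of n] by (metis of_nat_le_iff of_nat_numeral of_nat_power less_imp_le)
  have a2: "real (Suc (24*n)) \<le> 25 ^ n" using bern[of n 24] by simp
  have a3: "real (Suc (6*n)) \<le> 7 ^ n" using bern[of n 6] by simp
  have a4: "exp (real n) \<le> 3 ^ n"
  proof -
    have "exp (real n) = exp 1 ^ n" by (simp add: exp_of_nat_mult[symmetric])
    also have "\<dots> \<le> 3 ^ n" by (rule power_mono) (use exp_le in auto)
    finally show ?thesis .
  qed
  have "3 * real n * (real (Suc (24*n)) * (real (Suc (6*n)) ^ 3 * exp (real n) ^ 4) * 4 ^ (24*n) * 3)
        \<le> 3 * 2 ^ n * (25 ^ n * ((7 ^ n) ^ 3 * (3 ^ n) ^ 4) * 4 ^ (24*n) * 3)"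
    by (intro mult_mono mult_left_mono power_mono a1 a2 a3 a4) auto
  also have "\<dots> = 9 * (2 ^ n * 25 ^ n * (7 ^ n) ^ 3 * (3 ^ n) ^ 4 * 4 ^ (24*n))"
    by (simp add: mult_ac)
  also have "\<dots> = 9 * (2 * 25 * 7^3 * 3^4 * 4^24) ^ n"
  proof -
    have "((7::real) ^ n) ^ 3 = (7 ^ 3) ^ n" by (simp only: power_mult[symmetric] mult.commute)
    moreover have "((3::real) ^ n) ^ 4 = (3 ^ 4) ^ n" by (simp only: power_mult[symmetric] mult.commute)
    moreover have "(4::real) ^ (24*n) = (4 ^ 24) ^ n" by (simp only: power_mult)
    ultimately show ?thesis by (simp only: power_mult_distrib)
  qed
  finally show ?thesis .
qed

lemma core:
  assumes n: "1 \<le> n" and Gc: "continuous_on UNIV G"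
    and GL: "\<And>s t. \<bar>G s - G t\<bar> \<le> L * \<bar>s - t\<bar>"
    and GB: "\<And>t. \<bar>G t\<bar> \<le> Fm" and L0: "0 \<le> L"
  shows "\<exists>c. (\<forall>x\<in>{0..1}. \<bar>G x - (\<Sum>i\<le>24*n. c i * x ^ i)\<bar> \<le> 576 * (L + Fm) / real n) \<and>
             (\<forall>i. \<bar>c i\<bar> \<le> Fm * (9 * (2 * 25 * 7^3 * 3^4 * 4^24) ^ n))"
proof -
  have Fm0: "0 \<le> Fm" using GB[of 0] by linarith
  obtain c0 where c0e: "\<And>x. integral {-1..2} (\<lambda>t. G t * pk n (x - t)) = (\<Sum>i\<le>24*n. c0 i * x ^ i)"
    and c0b: "\<And>i. \<bar>c0 i\<bar> \<le> real (Suc (24*n)) * (real (Suc (6*n)) ^ 3 * exp (real n) ^ 4) * 4 ^ (24*n) * (3 * Fm)"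
    using conv_poly[OF polyrep_pk[OF n] Gc GB] by blast
  define \<kappa> where "\<kappa> = integral {-1..1} (pk n)"
  have kap: "1 / (3 * real n) \<le> \<kappa>" unfolding \<kappa>_def by (rule kappa_lower[OF n])
  have npos: "0 < real n" using n by simp
  have "0 < 1 / (3 * real n)" using npos by simp
  then have kpos: "0 < \<kappa>" using kap by linarith
  define c where "c i = c0 i / \<kappa>" for i
  have appr: "\<bar>G x - (\<Sum>i\<le>24*n. c i * x ^ i)\<bar> \<le> 576 * (L + Fm) / real n" if x: "x \<in> {0..1}" for x
  proof -
    have "(\<Sum>i\<le>24*n. c i * x ^ i) = integral {-1..2} (\<lambda>t. G t * pk n (x - t)) / \<kappa>"
      unfolding c0e c_def by (simp add: sum_divide_distrib)
    then show ?thesis using conv_approx[OF n x Gc GL GB L0] unfolding \<kappa>_def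
      by (simp add: abs_minus_commute)
  qed
  have cb: "\<bar>c i\<bar> \<le> Fm * (9 * (2 * 25 * 7^3 * 3^4 * 4^24) ^ n)" for i
  proof -
    have "\<bar>c i\<bar> = \<bar>c0 i\<bar> / \<kappa>" unfolding c_def using kpos by (simp add: abs_div)
    also have "\<dots> \<le> \<bar>c0 i\<bar> / (1 / (3 * real n))"
      by (rule divide_left_mono) (use kap kpos npos in auto)
    also have "\<dots> = 3 * real n * \<bar>c0 i\<bar>" by simp
    also have "\<dots> \<le> 3 * real n * (real (Suc (24*n)) * (real (Suc (6*n)) ^ 3 * exp (real n) ^ 4) * 4 ^ (24*n) * (3 * Fm))"
      by (rule mult_left_mono[OF c0b]) simp
    also have "\<dots> = Fm * (3 * real n * (real (Suc (24*n)) * (real (Suc (6*n)) ^ 3 * exp (real n) ^ 4) * 4 ^ (24*n) * 3))"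
      by (simp add: mult_ac)
    also have "\<dots> \<le> Fm * (9 * (2 * 25 * 7^3 * 3^4 * 4^24) ^ n)"
      by (rule mult_left_mono[OF pow_bound[OF n] Fm0])
    finally show ?thesis .
  qed
  show ?thesis using appr cb by blast
qed

lemma Zprops:
  fixes w :: "nat \<Rightarrow> real" and \<theta>s :: real
  assumes th: "\<theta>s > 0" and wpos: "\<And>x. w x > 0" and rad: "ereal \<theta>s < conv_radius w"
  shows "\<exists>Zm LZ. 0 < Zm \<and> 0 \<le> LZ \<and>
     (\<forall>\<theta>\<in>{0..\<theta>s}. w 0 \<le> (\<Sum>x. w x * \<theta> ^ x) \<and> (\<Sum>x. w x * \<theta> ^ x) \<le> Zm) \<and>
     (\<forall>s\<in>{0..\<theta>s}. \<forall>t\<in>{0..\<theta>s}. \<bar>(\<Sum>x. w x * s ^ x) - (\<Sum>x. w x * t ^ x)\<bar> \<le> LZ * \<bar>s - t\<bar>)"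
proof -
  obtain r where r1: "ereal \<theta>s < ereal r" and r2: "ereal r < conv_radius w"
    using ereal_dense2[OF rad] by blast
  have thr: "\<theta>s < r" using r1 by simp
  have sm: "summable (\<lambda>x. w x * z ^ x)" if "norm z < r" for z :: real
  proof (rule summable_in_conv_radius)
    have "ereal (norm z) < ereal r" using that by simp
    then show "ereal (norm z) < conv_radius w" using r2 by (rule order.strict_trans)
  qed
  have smr: "summable (\<lambda>x. w x * r ^ x)"
    by (rule summable_in_conv_radius) (use r2 th thr in auto)
  have smd: "summable (\<lambda>m. diffs w m * z ^ m)" if "norm z < r" for z :: real
    by (rule termdiff_converges[OF that]) (use sm in auto)
  define Z where "Z \<theta> = (\<Sum>x. w x * \<theta> ^ x)" for \<theta> :: real
  define LZ where "LZ = (\<Sum>m. diffs w m * \<theta>s ^ m)"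
  have dpos: "0 \<le> diffs w m" for m using wpos[of "Suc m"] by (simp add: diffs_def)
  have der: "DERIV Z \<xi> :> (\<Sum>m. diffs w m * \<xi> ^ m)" if "\<xi> \<in> {0..\<theta>s}" for \<xi>
    unfolding Z_def by (rule termdiffs_strong[OF smr]) (use that thr th in auto)
  have dbnd: "(\<Sum>m. diffs w m * \<xi> ^ m) \<le> LZ" if "\<xi> \<in> {0..\<theta>s}" for \<xi>
    unfolding LZ_def
    by (rule suminf_le) (use that dpos smd thr th in \<open>auto intro!: mult_left_mono power_mono\<close>)
  have LZ0: "0 \<le> LZ" unfolding LZ_def
    by (rule suminf_nonneg) (use smd thr th dpos in auto)
  have lip: "\<bar>Z s - Z t\<bar> \<le> LZ * \<bar>s - t\<bar>" if s: "s \<in> {0..\<theta>s}" and t: "t \<in> {0..\<theta>s}" for s t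
  proof -
    have gen: "\<bar>Z b - Z a\<bar> \<le> LZ * (b - a)" if ab: "a < b" "a \<in> {0..\<theta>s}" "b \<in> {0..\<theta>s}" for a b
    proof -
      obtain z where z: "a < z" "z < b" and eq: "Z b - Z a = (b - a) * (\<Sum>m. diffs w m * z ^ m)"
        using MVT2[OF ab(1), of Z "\<lambda>\<xi>. \<Sum>m. diffs w m * \<xi> ^ m"] der ab by auto
      have zin: "z \<in> {0..\<theta>s}" using z ab by auto
      have "0 \<le> (\<Sum>m. diffs w m * z ^ m)"
        by (rule suminf_nonneg) (use smd zin thr dpos in auto)
      then have "\<bar>Z b - Z a\<bar> = (b - a) * (\<Sum>m. diffs w m * z ^ m)" using eq ab by (simp add: abs_mult)
      also have "\<dots> \<le> (b - a) * LZ" by (rule mult_left_mono[OF dbnd[OF zin]]) (use ab in auto)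
      finally show ?thesis by (simp only: mult.commute)
    qed
    consider "s < t" | "s = t" | "t < s" by linarith
    then show ?thesis
    proof cases
      case 1 then show ?thesis using gen[OF 1 s t] by (simp add: abs_minus_commute)
    next
      case 3 then show ?thesis using gen[OF 3 t s] by simp
    qed simp
  qed
  have low: "w 0 \<le> Z \<theta>" if "\<theta> \<in> {0..\<theta>s}" for \<theta>
  proof -
    have nn: "0 \<le> w x * \<theta> ^ x" for x
      using that wpos[of x] by (simp add: less_imp_le)
    have s1: "summable (\<lambda>x. w x * \<theta> ^ x)" by (rule sm) (use that thr in auto)
    have "sum (\<lambda>x. w x * \<theta> ^ x) {0} \<le> Z \<theta>" unfolding Z_def
      by (rule sum_le_suminf[OF s1]) (use nn in auto)
    then show ?thesis by simp
  qed
  have up: "Z \<theta> \<le> Z \<theta>s" if "\<theta> \<in> {0..\<theta>s}" for \<theta>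
    unfolding Z_def
  proof (rule suminf_le)
    show "summable (\<lambda>x. w x * \<theta> ^ x)" by (rule sm) (use that thr in auto)
    show "summable (\<lambda>x. w x * \<theta>s ^ x)" by (rule sm) (use th thr in auto)
    fix x show "w x * \<theta> ^ x \<le> w x * \<theta>s ^ x"
      by (rule mult_left_mono[OF power_mono]) (use that wpos[of x] in auto)
  qed
  have Zp: "0 < Z \<theta>s" using low[of \<theta>s] wpos[of 0] th by auto
  show ?thesis
    using Zp LZ0 low up lip unfolding Z_def by blast
qed

theorem lemma5p4:
  fixes w :: "nat \<Rightarrow> real" and \<theta>s :: real
  assumes "\<theta>s > 0"
    and "\<And>x. w x > 0"
    and "ereal \<theta>s < conv_radius w"
  shows "\<exists>C>0. \<forall>l :: real \<Rightarrow> real. \<forall>k::nat.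
           1-lipschitz_on {0..\<theta>s} l \<longrightarrow> l 0 = 0 \<longrightarrow> k \<ge> 1 \<longrightarrow>
           (\<exists>b :: nat \<Rightarrow> real.
              (\<forall>\<theta>\<in>{0..\<theta>s}. \<bar>l \<theta> - (\<Sum>x\<le>k. b x * fpmf w x \<theta>)\<bar> \<le> C / real k) \<and>
              (\<forall>x\<le>k. \<bar>b x\<bar> \<le> C ^ k * (MAX x\<in>{1..k}. 1 / w x)))"
proof -
  note th = assms(1) and wpos = assms(2)
  define Z where "Z \<theta> = (\<Sum>x. w x * \<theta> ^ x)" for \<theta> :: real
  obtain Zm LZ where Zm0: "0 < Zm" and LZ0: "0 \<le> LZ"
    and Zb: "\<And>\<theta>. \<theta> \<in> {0..\<theta>s} \<Longrightarrow> w 0 \<le> Z \<theta> \<and> Z \<theta> \<le> Zm"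
    and Zl: "\<And>s t. s \<in> {0..\<theta>s} \<Longrightarrow> t \<in> {0..\<theta>s} \<Longrightarrow> \<bar>Z s - Z t\<bar> \<le> LZ * \<bar>s - t\<bar>"
    using Zprops[OF assms] unfolding Z_def by blast
  define L where "L = \<theta>s * (Zm + \<theta>s * LZ)"
  define Fm where "Fm = \<theta>s * Zm"
  define K where "K = (2 * 25 * 7^3 * 3^4 * 4^24 :: real)"
  define M1 where "M1 = max 1 (1 / \<theta>s)"
  define a where "a = max 1 (Fm * 9 * max 1 (w 1 / w 0))"
  define B where "B = K * M1 ^ 24"
  define C where "C = max (a * B) (max (24 * \<theta>s) (576 * 48 * (L + Fm) / w 0))"
  have w0: "0 < w 0" using wpos by simp
  have L0: "0 \<le> L" unfolding L_def using th Zm0 LZ0 by simp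
  have Fm0: "0 \<le> Fm" unfolding Fm_def using th Zm0 by simp
  have a1: "1 \<le> a" unfolding a_def by simp
  have K1: "1 \<le> K" unfolding K_def by simp
  have M11: "1 \<le> M1" unfolding M1_def by simp
  have "1 * 1 \<le> K * M1 ^ 24" by (rule mult_mono) (use K1 M11 one_le_power[OF M11] in auto)
  then have B1: "1 \<le> B" unfolding B_def by simp
  have "1 * 1 \<le> a * B" by (rule mult_mono) (use a1 B1 in auto)
  then have aB: "1 \<le> a * B" by simp
  have C1: "1 \<le> C" unfolding C_def using aB by simp
  have C_aB: "a * B \<le> C" and C_th: "24 * \<theta>s \<le> C" and C_err: "576 * 48 * (L + Fm) / w 0 \<le> C"
    unfolding C_def by auto
  show ?thesis
  proof (intro exI[of _ C] conjI allI impI)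
    show "0 < C" using C1 by simp
    fix l :: "real \<Rightarrow> real" and k :: nat
    assume lip: "1-lipschitz_on {0..\<theta>s} l" and l0: "l 0 = 0" and k1: "1 \<le> k"
    have lipd: "\<bar>l p - l q\<bar> \<le> \<bar>p - q\<bar>" if "p \<in> {0..\<theta>s}" "q \<in> {0..\<theta>s}" for p q
      using lipschitz_onD[OF lip that] by (simp add: dist_real_def)
    have lb: "\<bar>l p\<bar> \<le> \<theta>s" if "p \<in> {0..\<theta>s}" for p
      using lipd[OF that, of 0] l0 th that by auto
    define MX where "MX = (MAX x\<in>{1..k}. 1 / w x)"
    have MXge: "1 / w x \<le> MX" if "x \<in> {1..k}" for x
      unfolding MX_def by (rule Max_ge) (use that in auto)
    have MX0: "0 \<le> MX" using MXge[of 1] k1 wpos[of 1] by (smt (verit) atLeastAtMost_iff divide_pos_pos le_refl)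
    show "\<exists>b. (\<forall>\<theta>\<in>{0..\<theta>s}. \<bar>l \<theta> - (\<Sum>x\<le>k. b x * fpmf w x \<theta>)\<bar> \<le> C / real k) \<and>
              (\<forall>x\<le>k. \<bar>b x\<bar> \<le> C ^ k * (MAX x\<in>{1..k}. 1 / w x))"
    proof (cases "k < 24")
      case True
      have "\<bar>l \<theta> - (\<Sum>x\<le>k. 0 * fpmf w x \<theta>)\<bar> \<le> C / real k" if "\<theta> \<in> {0..\<theta>s}" for \<theta>
      proof -
        have "\<bar>l \<theta>\<bar> \<le> \<theta>s" by (rule lb[OF that])
        also have "\<dots> \<le> 24 * \<theta>s / real k"
          using True k1 th by (simp add: field_simps)
        also have "\<dots> \<le> C / real k" by (rule divide_right_mono[OF C_th]) simp
        finally show ?thesis by simp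
      qed
      moreover have "\<bar>(0::real)\<bar> \<le> C ^ k * MX" using C1 MX0 by simp
      ultimately show ?thesis unfolding MX_def by (intro exI[of _ "\<lambda>_. 0"]) auto
    next
      case False
      define n where "n = k div 24"
      have n1: "1 \<le> n" using False unfolding n_def by simp
      have nk: "24 * n \<le> k" unfolding n_def by simp
      have kn: "real k \<le> 48 * real n"
      proof -
        have "k < 24 * n + 24" unfolding n_def by simp
        then have "k \<le> 48 * n" using n1 by linarith
        then show ?thesis by (metis of_nat_le_iff of_nat_mult of_nat_numeral)
      qed
      have nle: "n \<le> k" using nk by simp
      define cl where "cl y = max 0 (min 1 y)" for y :: real
      define G where "G y = l (\<theta>s * cl y) * Z (\<theta>s * cl y)" for y
      have clin: "\<theta>s * cl y \<in> {0..\<theta>s}" for y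
        unfolding cl_def using th by (auto simp: mult_le_cancel_left1)
      have cll: "\<bar>cl s - cl t\<bar> \<le> \<bar>s - t\<bar>" for s t unfolding cl_def abs_le_iff by (auto simp: max_def min_def)
      have GL: "\<bar>G s - G t\<bar> \<le> L * \<bar>s - t\<bar>" for s t
      proof -
        let ?p = "\<theta>s * cl s" and ?q = "\<theta>s * cl t"
        have pq: "\<bar>?p - ?q\<bar> \<le> \<theta>s * \<bar>s - t\<bar>"
          using mult_left_mono[OF cll[of s t], of \<theta>s] th by (simp add: abs_mult right_diff_distrib[symmetric])
        have "G s - G t = (l ?p - l ?q) * Z ?p + l ?q * (Z ?p - Z ?q)" unfolding G_def by (simp add: algebra_simps)
        then have "\<bar>G s - G t\<bar> \<le> \<bar>l ?p - l ?q\<bar> * \<bar>Z ?p\<bar> + \<bar>l ?q\<bar> * \<bar>Z ?p - Z ?q\<bar>"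
          by (simp add: abs_mult[symmetric] abs_triangle_ineq)
        also have "\<dots> \<le> \<bar>?p - ?q\<bar> * Zm + \<theta>s * (LZ * \<bar>?p - ?q\<bar>)"
        proof (intro add_mono mult_mono)
          show "\<bar>l ?p - l ?q\<bar> \<le> \<bar>?p - ?q\<bar>" by (rule lipd[OF clin clin])
          show "\<bar>Z ?p\<bar> \<le> Zm" using Zb[OF clin[of s]] w0 by auto
          show "\<bar>l ?q\<bar> \<le> \<theta>s" by (rule lb[OF clin])
          show "\<bar>Z ?p - Z ?q\<bar> \<le> LZ * \<bar>?p - ?q\<bar>" by (rule Zl[OF clin clin])
        qed (use th LZ0 in auto)
        also have "\<dots> = (Zm + \<theta>s * LZ) * \<bar>?p - ?q\<bar>" by (simp add: algebra_simps)
        also have "\<dots> \<le> (Zm + \<theta>s * LZ) * (\<theta>s * \<bar>s - t\<bar>)"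
          by (rule mult_left_mono[OF pq]) (use Zm0 th LZ0 in auto)
        also have "\<dots> = L * \<bar>s - t\<bar>" unfolding L_def by (simp add: mult_ac)
        finally show ?thesis .
      qed
      have GB: "\<bar>G t\<bar> \<le> Fm" for t
      proof -
        have "\<bar>G t\<bar> = \<bar>l (\<theta>s * cl t)\<bar> * \<bar>Z (\<theta>s * cl t)\<bar>" unfolding G_def by (simp add: abs_mult)
        also have "\<dots> \<le> \<theta>s * Zm"
          by (intro mult_mono lb clin) (use Zb[OF clin[of t]] w0 th in auto)
        finally show ?thesis unfolding Fm_def .
      qed
      have Gc: "continuous_on UNIV G"
      proof (rule lipschitz_on_continuous_on)
        show "L-lipschitz_on UNIV G"
          by (rule lipschitz_onI) (use GL L0 in \<open>auto simp: dist_real_def\<close>)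
      qed
      obtain c where capp: "\<And>x. x \<in> {0..1} \<Longrightarrow> \<bar>G x - (\<Sum>i\<le>24*n. c i * x ^ i)\<bar> \<le> 576 * (L + Fm) / real n"
        and cb: "\<And>i. \<bar>c i\<bar> \<le> Fm * (9 * K ^ n)"
        using core[OF n1 Gc GL GB L0] unfolding K_def by blast
      define b where "b x = (if x \<le> 24*n then c x / (\<theta>s ^ x * w x) else 0)" for x
      have approx: "\<bar>l \<theta> - (\<Sum>x\<le>k. b x * fpmf w x \<theta>)\<bar> \<le> C / real k" if th_in: "\<theta> \<in> {0..\<theta>s}" for \<theta>
      proof -
        define y where "y = \<theta> / \<theta>s"
        have y01: "y \<in> {0..1}" unfolding y_def using th_in th by auto
        have yth: "\<theta>s * cl y = \<theta>" unfolding cl_def y_def using th_in th by auto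
        have Gy: "G y = l \<theta> * Z \<theta>" unfolding G_def yth ..
        have Zpos: "0 < Z \<theta>" using Zb[OF th_in] w0 by linarith
        define g where "g = gfun w \<theta>"
        have g_eq: "g = inverse (Z \<theta>)" unfolding g_def gfun_def Z_def ..
        have gle: "g \<le> 1 / w 0" unfolding g_eq using Zb[OF th_in] w0 by (simp add: field_simps)
        have g0: "0 \<le> g" unfolding g_eq using Zpos by simp
        define S where "S = (\<Sum>i\<le>24*n. c i * y ^ i)"
        have sum_eq: "(\<Sum>x\<le>k. b x * fpmf w x \<theta>) = g * S"
        proof -
          have "(\<Sum>x\<le>k. b x * fpmf w x \<theta>) = (\<Sum>x\<le>24*n. b x * fpmf w x \<theta>)"
            by (rule sum.mono_neutral_right) (use nk in \<open>auto simp: b_def\<close>)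
          also have "\<dots> = (\<Sum>x\<le>24*n. g * (c x * y ^ x))"
          proof (rule sum.cong[OF refl])
            fix x assume "x \<in> {..24*n}"
            then have bx: "b x = c x / (\<theta>s ^ x * w x)" unfolding b_def by simp
            have wx: "w x \<noteq> 0" using wpos[of x] by simp
            have thx: "\<theta>s ^ x \<noteq> 0" using th by simp
            show "b x * fpmf w x \<theta> = g * (c x * y ^ x)"
              unfolding bx fpmf_def g_def y_def using wx thx by (simp add: power_divide field_simps)
          qed
          also have "\<dots> = g * S" unfolding S_def by (simp add: sum_distrib_left)
          finally show ?thesis .
        qed
        have "l \<theta> - g * S = g * (G y - S)" unfolding Gy g_eq using Zpos by (simp add: field_simps)
        then have "\<bar>l \<theta> - (\<Sum>x\<le>k. b x * fpmf w x \<theta>)\<bar> = g * \<bar>G y - S\<bar>"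
          unfolding sum_eq using g0 by (simp add: abs_mult)
        also have "\<dots> \<le> (1 / w 0) * (576 * (L + Fm) / real n)"
          by (intro mult_mono gle) (use capp[OF y01] g0 S_def w0 in auto)
        also have "\<dots> \<le> (1 / w 0) * (576 * 48 * (L + Fm) / real k)"
        proof (rule mult_left_mono)
          have "1 / real n \<le> 48 / real k" using kn n1 k1 by (simp add: field_simps)
          then have "(576 * (L + Fm)) * (1 / real n) \<le> (576 * (L + Fm)) * (48 / real k)"
            by (rule mult_left_mono) (use L0 Fm0 in auto)
          then show "576 * (L + Fm) / real n \<le> 576 * 48 * (L + Fm) / real k" by simp
        qed (use w0 in auto)
        also have "\<dots> = (576 * 48 * (L + Fm) / w 0) / real k" by simp
        also have "\<dots> \<le> C / real k" by (rule divide_right_mono[OF C_err]) simp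
        finally show ?thesis .
      qed
      have coef: "\<bar>b x\<bar> \<le> C ^ k * MX" if "x \<le> k" for x
      proof (cases "x \<le> 24 * n")
        case False then show ?thesis using C1 MX0 by (simp add: b_def)
      next
        case True
        have wx: "0 < w x" by (rule wpos)
        have invw: "1 / w x \<le> max 1 (w 1 / w 0) * MX"
        proof (cases "x = 0")
          case True
          have "1 / w 0 = (w 1 / w 0) * (1 / w 1)" using wpos[of 1] w0 by simp
          also have "\<dots> \<le> max 1 (w 1 / w 0) * MX"
            by (intro mult_mono MXge) (use k1 MX0 wpos[of 1] w0 in auto)
          finally show ?thesis using True by simp
        next
          case False
          have "1 / w x \<le> MX" by (rule MXge) (use False that in auto)
          also have "\<dots> \<le> max 1 (w 1 / w 0) * MX" using MX0 by (simp add: mult_le_cancel_right1)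
          finally show ?thesis .
        qed
        have thx: "(1 / \<theta>s) ^ x \<le> M1 ^ (24 * n)"
        proof -
          have "(1 / \<theta>s) ^ x \<le> M1 ^ x" by (rule power_mono) (use th in \<open>auto simp: M1_def\<close>)
          also have "\<dots> \<le> M1 ^ (24 * n)" by (rule power_increasing[OF True M11])
          finally show ?thesis .
        qed
        have "\<bar>b x\<bar> = \<bar>c x\<bar> * (1 / \<theta>s) ^ x * (1 / w x)"
          unfolding b_def using True th wx by (simp add: abs_mult abs_div power_one_over field_simps)
        also have "\<dots> \<le> (Fm * (9 * K ^ n)) * M1 ^ (24 * n) * (max 1 (w 1 / w 0) * MX)"
          by (intro mult_mono cb thx invw) (use Fm0 th wx K1 M11 in auto)
        also have "\<dots> = (Fm * 9 * max 1 (w 1 / w 0)) * B ^ n * MX"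
          unfolding B_def by (simp add: power_mult_distrib power_mult[symmetric] mult_ac)
        also have "\<dots> \<le> a * B ^ n * MX"
          by (intro mult_right_mono) (use MX0 B1 in \<open>auto simp: a_def\<close>)
        also have "\<dots> \<le> (a * B) ^ n * MX"
        proof (rule mult_right_mono[OF _ MX0])
          have "a \<le> a ^ n" using a1 n1 by (simp add: power_increasing[of 1 n a, simplified])
          then have "a * B ^ n \<le> a ^ n * B ^ n" by (rule mult_right_mono) (use B1 in auto)
          then show "a * B ^ n \<le> (a * B) ^ n" by (simp add: power_mult_distrib)
        qed
        also have "\<dots> \<le> C ^ n * MX"
          by (intro mult_right_mono power_mono C_aB) (use aB MX0 in auto)
        also have "\<dots> \<le> C ^ k * MX"
          by (intro mult_right_mono power_increasing nle C1 MX0)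
        finally show ?thesis .
      qed
      show ?thesis using approx coef unfolding MX_def by blast
    qed
  qed
qed

end
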